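(* Let $X$ be a set of pointed Kripke models and $\Lambda$ a normal modal logic sound with respect to $X$. Every clean map $\boldsymbol{f}$ on the modal space $X_{\boldsymbol{\mathcal{L}}_{\Lambda}}$ is total and well-defined: for every precondition finite multi-pointed action model $\Sigma\Gamma$ closing, deterministic and exhaustive over $X$, and every $\boldsymbol{x}\in X_{\boldsymbol{\mathcal{L}}_{\Lambda}}$, the class of $x\otimes\Sigma\Gamma$ in $X_{\boldsymbol{\mathcal{L}}_{\Lambda}}$ exists and does not depend on the choice of representative $x\in\boldsymbol{x}$.
   Context: Signature: countable non-empty sets $\Phi$, $\mathcal{I}$; $\mathcal{L}$: $\varphi ::= \top\mid p\mid\neg\varphi\mid\varphi\wedge\varphi\mid\Box_i\varphi$ on pointed Kripke models (countable non-empty state sets, relations $R_i$, atom valuations), standard semantics. $\boldsymbol{\varphi}$: formulas $\Lambda$-provably equivalent to $\varphi$; $X_{\boldsymbol{\mathcal{L}}_{\Lambda}}=\{\boldsymbol{x}:x\in X\}$ with $\boldsymbol{x}=\{y\in X:y\models\varphi\iff x\models\varphi\ \forall\varphi\in\mathcal{L}\}$. A multi-pointed action model is $\Sigma\Gamma=(\llbracket\Sigma\rrbracket,\mathsf{R},pre,post,\Gamma)$: countable non-empty action set, relations $\mathsf{R}_i$ ($i\in\mathcal{I}$), $pre,post:\llbracket\Sigma\rrbracket\to\mathcal{L}$ with each $post(\sigma)$ either $\top$ or a conjunction of literals, $\emptyset\neq\Gamma\subseteq\llbracket\Sigma\rrbracket$. Precondition finite: $\{\boldsymbol{pre(\sigma)}:\sigma\in\llbracket\Sigma\rrbracket\}$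 finite. Exhaustive over $X$: each $x\in X$ satisfies $pre(\sigma)$ for some $\sigma\in\Gamma$. Deterministic over $X$: each $x\in X$ satisfies $pre(\sigma)\wedge pre(\sigma')\to\bot$ for $\sigma\neq\sigma'\in\Gamma$. Product update $Ms\otimes\Sigma\Gamma$: states $\{(s,\sigma):Ms\models pre(\sigma)\}$, $R'_i=\{((s,\sigma),(t,\tau)):(s,t)\in R_i,(\sigma,\tau)\in\mathsf{R}_i\}$, $\llbracket p\rrbracket'=\{(s,\sigma):s\in\llbracket p\rrbracket,post(\sigma)\not\models\neg p\}\cup\{(s,\sigma):post(\sigma)\models p\}$, designated state $(s,\sigma)$ with $\sigma\in\Gamma$, $Ms\models pre(\sigma)$. Closing over $X$: $x\otimes\Sigma\Gamma\in X$ for all $x\in X$. A map $\boldsymbol{f}$ on $X_{\boldsymbol{\mathcal{L}}_{\Lambda}}$ is clean if such a precondition finite $\Sigma\Gamma$, closing, deterministic and exhaustive over $X$, satisfies $\boldsymbol{f}(\boldsymbol{x})=\boldsymbol{y}$ iff $x\otimes\Sigma\Gamma\in\boldsymbol{y}$. *)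

theory Defs
  imports Main "HOL-Library.Countable" "HOL-Library.Nat_Bijection"
begin

datatype ('p, 'i) fm = Top | Atom 'p | Neg "('p,'i) fm" | Conj "('p,'i) fm" "('p,'i) fm"
  | Box 'i "('p,'i) fm"

definition Imp :: "('p,'i) fm \<Rightarrow> ('p,'i) fm \<Rightarrow> ('p,'i) fm" where
  "Imp a b = Neg (Conj a (Neg b))"

definition Iff :: "('p,'i) fm \<Rightarrow> ('p,'i) fm \<Rightarrow> ('p,'i) fm" where
  "Iff a b = Conj (Imp a b) (Imp b a)"

definition Bot :: "('p,'i) fm" where
  "Bot = Neg Top"

section \<open>Kripke models (countable state sets, represented as subsets of nat)\<close>

record ('p, 'i) kmodel =
  W :: "nat set"
  Rel :: "'i \<Rightarrow> (nat \<times> nat) set"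
  Val :: "'p \<Rightarrow> nat set"

type_synonym ('p, 'i) pmodel = "('p,'i) kmodel \<times> nat"

definition wf_model :: "('p,'i) kmodel \<Rightarrow> bool" where
  "wf_model M \<longleftrightarrow> W M \<noteq> {} \<and> (\<forall>i. Rel M i \<subseteq> W M \<times> W M) \<and> (\<forall>p. Val M p \<subseteq> W M)"

definition wf_pmodel :: "('p,'i) pmodel \<Rightarrow> bool" where
  "wf_pmodel x \<longleftrightarrow> wf_model (fst x) \<and> snd x \<in> W (fst x)"

fun sat :: "('p,'i) kmodel \<Rightarrow> nat \<Rightarrow> ('p,'i) fm \<Rightarrow> bool" where
  "sat M s Top = True"
| "sat M s (Atom p) = (s \<in> Val M p)"
| "sat M s (Neg a) = (\<not> sat M s a)"
| "sat M s (Conj a b) = (sat M s a \<and> sat M s b)"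
| "sat M s (Box i a) = (\<forall>t. (s, t) \<in> Rel M i \<longrightarrow> sat M t a)"

definition psat :: "('p,'i) pmodel \<Rightarrow> ('p,'i) fm \<Rightarrow> bool" where
  "psat x a = sat (fst x) (snd x) a"

definition entails :: "('p,'i) fm \<Rightarrow> ('p,'i) fm \<Rightarrow> bool" where
  "entails a b \<longleftrightarrow> (\<forall>x. wf_pmodel x \<longrightarrow> psat x a \<longrightarrow> psat x b)"

definition meq :: "('p,'i) pmodel \<Rightarrow> ('p,'i) pmodel \<Rightarrow> bool" where
  "meq x y \<longleftrightarrow> (\<forall>a. psat x a \<longleftrightarrow> psat y a)"

definition mclass :: "('p,'i) pmodel set \<Rightarrow> ('p,'i) pmodel \<Rightarrow> ('p,'i) pmodel set" where
  "mclass X x = {y \<in> X. meq y x}"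

definition mspace :: "('p,'i) pmodel set \<Rightarrow> ('p,'i) pmodel set set" where
  "mspace X = mclass X ` X"

fun peval :: "(('p,'i) fm \<Rightarrow> bool) \<Rightarrow> ('p,'i) fm \<Rightarrow> bool" where
  "peval v Top = True"
| "peval v (Atom p) = v (Atom p)"
| "peval v (Neg a) = (\<not> peval v a)"
| "peval v (Conj a b) = (peval v a \<and> peval v b)"
| "peval v (Box i a) = v (Box i a)"

definition tautology :: "('p,'i) fm \<Rightarrow> bool" where
  "tautology a \<longleftrightarrow> (\<forall>v. peval v a)"

fun subst :: "('p \<Rightarrow> ('p,'i) fm) \<Rightarrow> ('p,'i) fm \<Rightarrow> ('p,'i) fm" where
  "subst f Top = Top"
| "subst f (Atom p) = f p"
| "subst f (Neg a) = Neg (subst f a)"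
| "subst f (Conj a b) = Conj (subst f a) (subst f b)"
| "subst f (Box i a) = Box i (subst f a)"

definition normal_logic :: "('p,'i) fm set \<Rightarrow> bool" where
  "normal_logic \<Lambda> \<longleftrightarrow>
     (\<forall>a. tautology a \<longrightarrow> a \<in> \<Lambda>)
   \<and> (\<forall>i a b. Imp (Box i (Imp a b)) (Imp (Box i a) (Box i b)) \<in> \<Lambda>)
   \<and> (\<forall>a b. a \<in> \<Lambda> \<longrightarrow> Imp a b \<in> \<Lambda> \<longrightarrow> b \<in> \<Lambda>)
   \<and> (\<forall>i a. a \<in> \<Lambda> \<longrightarrow> Box i a \<in> \<Lambda>)
   \<and> (\<forall>f a. a \<in> \<Lambda> \<longrightarrow> subst f a \<in> \<Lambda>)"

definition sound_wrt :: "('p,'i) fm set \<Rightarrow> ('p,'i) pmodel set \<Rightarrow> bool" where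
  "sound_wrt \<Lambda> X \<longleftrightarrow> (\<forall>a\<in>\<Lambda>. \<forall>x\<in>X. psat x a)"

definition pclass :: "('p,'i) fm set \<Rightarrow> ('p,'i) fm \<Rightarrow> ('p,'i) fm set" where
  "pclass \<Lambda> a = {b. Iff a b \<in> \<Lambda>}"

record ('p, 'i) amodel =
  Act :: "nat set"
  ARel :: "'i \<Rightarrow> (nat \<times> nat) set"
  pre :: "nat \<Rightarrow> ('p,'i) fm"
  post :: "nat \<Rightarrow> ('p,'i) fm"

inductive lit_conj :: "('p,'i) fm \<Rightarrow> bool" where
  "lit_conj (Atom p)"
| "lit_conj (Neg (Atom p))"
| "lit_conj a \<Longrightarrow> lit_conj b \<Longrightarrow> lit_conj (Conj a b)"

definition wf_amodel :: "('p,'i) amodel \<Rightarrow> nat set \<Rightarrow> bool" where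
  "wf_amodel E \<Gamma> \<longleftrightarrow> Act E \<noteq> {} \<and> (\<forall>i. ARel E i \<subseteq> Act E \<times> Act E)
     \<and> (\<forall>\<sigma>\<in>Act E. post E \<sigma> = Top \<or> lit_conj (post E \<sigma>))
     \<and> \<Gamma> \<noteq> {} \<and> \<Gamma> \<subseteq> Act E"

definition precondition_finite :: "('p,'i) fm set \<Rightarrow> ('p,'i) amodel \<Rightarrow> bool" where
  "precondition_finite \<Lambda> E \<longleftrightarrow> finite ((\<lambda>\<sigma>. pclass \<Lambda> (pre E \<sigma>)) ` Act E)"

definition exhaustive :: "('p,'i) amodel \<Rightarrow> nat set \<Rightarrow> ('p,'i) pmodel set \<Rightarrow> bool" where
  "exhaustive E \<Gamma> X \<longleftrightarrow> (\<forall>x\<in>X. \<exists>\<sigma>\<in>\<Gamma>. psat x (pre E \<sigma>))"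

definition deterministic :: "('p,'i) amodel \<Rightarrow> nat set \<Rightarrow> ('p,'i) pmodel set \<Rightarrow> bool" where
  "deterministic E \<Gamma> X \<longleftrightarrow>
     (\<forall>x\<in>X. \<forall>\<sigma>\<in>\<Gamma>. \<forall>\<sigma>'\<in>\<Gamma>. \<sigma> \<noteq> \<sigma>' \<longrightarrow> psat x (Imp (Conj (pre E \<sigma>) (pre E \<sigma>')) Bot))"

section \<open>Product update (pairs of states/actions encoded into nat)\<close>

definition upd_model :: "('p,'i) kmodel \<Rightarrow> ('p,'i) amodel \<Rightarrow> ('p,'i) kmodel" where
  "upd_model M E =
    (let S = {prod_encode (s, \<sigma>) | s \<sigma>. s \<in> W M \<and> \<sigma> \<in> Act E \<and> sat M s (pre E \<sigma>)} in
     \<lparr> W = S,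
       Rel = (\<lambda>i. {(prod_encode (s, \<sigma>), prod_encode (t, \<tau>)) | s \<sigma> t \<tau>.
                    prod_encode (s, \<sigma>) \<in> S \<and> prod_encode (t, \<tau>) \<in> S \<and>
                    (s, t) \<in> Rel M i \<and> (\<sigma>, \<tau>) \<in> ARel E i}),
       Val = (\<lambda>p. {prod_encode (s, \<sigma>) | s \<sigma>. prod_encode (s, \<sigma>) \<in> S \<and>
                    ((s \<in> Val M p \<and> \<not> entails (post E \<sigma>) (Neg (Atom p)))
                     \<or> entails (post E \<sigma>) (Atom p))}) \<rparr>)"

definition upd :: "('p,'i) pmodel \<Rightarrow> ('p,'i) amodel \<Rightarrow> nat set \<Rightarrow> ('p,'i) pmodel" where
  "upd x E \<Gamma> = (upd_model (fst x) E,
      prod_encode (snd x, THE \<sigma>. \<sigma> \<in> \<Gamma> \<and> psat x (pre E \<sigma>)))"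

definition closing :: "('p,'i) amodel \<Rightarrow> nat set \<Rightarrow> ('p,'i) pmodel set \<Rightarrow> bool" where
  "closing E \<Gamma> X \<longleftrightarrow> (\<forall>x\<in>X. upd x E \<Gamma> \<in> X)"

end

theory Submission
  imports Defs
begin

lemma sat_Imp[simp]: "sat M s (Imp a b) = (sat M s a \<longrightarrow> sat M s b)"
  by (simp add: Imp_def)
lemma sat_Iff[simp]: "sat M s (Iff a b) = (sat M s a \<longleftrightarrow> sat M s b)"
  by (auto simp add: Iff_def)
lemma sat_Bot[simp]: "sat M s Bot = False"
  by (simp add: Bot_def)

fun conjs :: "('p,'i) fm list \<Rightarrow> ('p,'i) fm" where
  "conjs [] = Top"
| "conjs (a # as) = Conj a (conjs as)"

lemma sat_conjs: "sat M s (conjs xs) = (\<forall>a\<in>set xs. sat M s a)"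
  by (induction xs) auto

definition list_of :: "'a set \<Rightarrow> 'a list" where
  "list_of S = (SOME xs. set xs = S)"

lemma set_list_of: "finite S \<Longrightarrow> set (list_of S) = S"
  unfolding list_of_def by (metis (mono_tags) finite_list someI_ex)

lemma upd_W: "prod_encode (s,\<sigma>) \<in> W (upd_model M E) \<longleftrightarrow>
   s \<in> W M \<and> \<sigma> \<in> Act E \<and> sat M s (pre E \<sigma>)"
  unfolding upd_model_def Let_def by (auto simp: prod_encode_eq)

lemma upd_Rel: "(prod_encode (s,\<sigma>), u) \<in> Rel (upd_model M E) i \<longleftrightarrow>
   (\<exists>t \<tau>. u = prod_encode (t,\<tau>) \<and> prod_encode (s,\<sigma>) \<in> W (upd_model M E)
     \<and> prod_encode (t,\<tau>) \<in> W (upd_model M E) \<and> (s,t) \<in> Rel M i \<and> (\<sigma>,\<tau>) \<in> ARel E i)"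
  unfolding upd_W
  unfolding upd_model_def Let_def by (auto simp: prod_encode_eq)

lemma upd_Val: "prod_encode (s,\<sigma>) \<in> Val (upd_model M E) p \<longleftrightarrow>
   prod_encode (s,\<sigma>) \<in> W (upd_model M E) \<and>
   ((s \<in> Val M p \<and> \<not> entails (post E \<sigma>) (Neg (Atom p))) \<or> entails (post E \<sigma>) (Atom p))"
  unfolding upd_W
  unfolding upd_model_def Let_def by (auto simp: prod_encode_eq)

definition good :: "('p,'i) fm set \<Rightarrow> ('p,'i) kmodel \<Rightarrow> nat \<Rightarrow> bool" where
  "good \<Lambda> M s \<longleftrightarrow> (\<forall>a\<in>\<Lambda>. sat M s a)"

lemma good_succ: "normal_logic \<Lambda> \<Longrightarrow> good \<Lambda> M s \<Longrightarrow> (s,t) \<in> Rel M i \<Longrightarrow> good \<Lambda> M t"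
  unfolding good_def normal_logic_def by (metis sat.simps(5))

lemma Iff_refl: "normal_logic \<Lambda> \<Longrightarrow> Iff a a \<in> \<Lambda>"
  unfolding normal_logic_def tautology_def by (auto simp: Iff_def Imp_def)

lemma pclass_eq: "normal_logic \<Lambda> \<Longrightarrow> good \<Lambda> M s \<Longrightarrow> pclass \<Lambda> a = pclass \<Lambda> b
   \<Longrightarrow> sat M s a = sat M s b"
proof -
  assume n: "normal_logic \<Lambda>" and g: "good \<Lambda> M s" and e: "pclass \<Lambda> a = pclass \<Lambda> b"
  have "a \<in> pclass \<Lambda> a" using Iff_refl[OF n] by (simp add: pclass_def)
  hence "a \<in> pclass \<Lambda> b" using e by simp
  hence "Iff b a \<in> \<Lambda>" by (simp add: pclass_def)
  thus ?thesis using g unfolding good_def by auto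
qed

lemma translation:
  assumes n: "normal_logic \<Lambda>" and wa: "wf_amodel E \<Gamma>" and pf: "precondition_finite \<Lambda> E"
  shows "\<exists>T. finite (T ` Act E) \<and> (\<forall>\<sigma>\<in>Act E. \<forall>M s. wf_model M \<longrightarrow> good \<Lambda> M s \<longrightarrow> s \<in> W M
      \<longrightarrow> sat M s (pre E \<sigma>) \<longrightarrow> (sat (upd_model M E) (prod_encode (s,\<sigma>)) \<phi> \<longleftrightarrow> sat M s (T \<sigma>)))"
proof (induction \<phi>)
  case Top
  have "finite ((\<lambda>_. Top) ` Act E)" by (rule finite_subset[of _ "{Top}"]) auto
  thus ?case by (intro exI[of _ "\<lambda>_. Top"]) auto
next
  case (Atom p)
  let ?T = "\<lambda>\<sigma>. if entails (post E \<sigma>) (Atom p) then Top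
     else if entails (post E \<sigma>) (Neg (Atom p)) then Bot else Atom p"
  have "?T ` Act E \<subseteq> {Top, Bot, Atom p}" by auto
  hence "finite (?T ` Act E)" by (rule finite_subset) auto
  moreover have "\<forall>\<sigma>\<in>Act E. \<forall>M s. wf_model M \<longrightarrow> good \<Lambda> M s \<longrightarrow> s \<in> W M
      \<longrightarrow> sat M s (pre E \<sigma>) \<longrightarrow> (sat (upd_model M E) (prod_encode (s,\<sigma>)) (Atom p) \<longleftrightarrow> sat M s (?T \<sigma>))"
    by (auto simp: upd_Val upd_W)
  ultimately show ?case by blast
next
  case (Neg \<phi>)
  then obtain T where T: "finite (T ` Act E)" "\<forall>\<sigma>\<in>Act E. \<forall>M s. wf_model M \<longrightarrow> good \<Lambda> M s \<longrightarrow> s \<in> W M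
      \<longrightarrow> sat M s (pre E \<sigma>) \<longrightarrow> (sat (upd_model M E) (prod_encode (s,\<sigma>)) \<phi> \<longleftrightarrow> sat M s (T \<sigma>))"
    by blast
  have "(\<lambda>\<sigma>. Neg (T \<sigma>)) ` Act E = Neg ` (T ` Act E)" by auto
  hence "finite ((\<lambda>\<sigma>. Neg (T \<sigma>)) ` Act E)" using T(1) by simp
  thus ?case using T(2) by (intro exI[of _ "\<lambda>\<sigma>. Neg (T \<sigma>)"]) auto
next
  case (Conj \<phi>1 \<phi>2)
  then obtain T1 T2 where T1: "finite (T1 ` Act E)" "\<forall>\<sigma>\<in>Act E. \<forall>M s. wf_model M \<longrightarrow> good \<Lambda> M s \<longrightarrow> s \<in> W M
      \<longrightarrow> sat M s (pre E \<sigma>) \<longrightarrow> (sat (upd_model M E) (prod_encode (s,\<sigma>)) \<phi>1 \<longleftrightarrow> sat M s (T1 \<sigma>))"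
   and T2: "finite (T2 ` Act E)" "\<forall>\<sigma>\<in>Act E. \<forall>M s. wf_model M \<longrightarrow> good \<Lambda> M s \<longrightarrow> s \<in> W M
      \<longrightarrow> sat M s (pre E \<sigma>) \<longrightarrow> (sat (upd_model M E) (prod_encode (s,\<sigma>)) \<phi>2 \<longleftrightarrow> sat M s (T2 \<sigma>))"
    by blast
  have "(\<lambda>\<sigma>. Conj (T1 \<sigma>) (T2 \<sigma>)) ` Act E \<subseteq> (\<lambda>(a,b). Conj a b) ` (T1 ` Act E \<times> T2 ` Act E)" by auto
  hence "finite ((\<lambda>\<sigma>. Conj (T1 \<sigma>) (T2 \<sigma>)) ` Act E)"
    using T1(1) T2(1) by (meson finite_SigmaI finite_imageI finite_subset)
  thus ?case using T1(2) T2(2) by (intro exI[of _ "\<lambda>\<sigma>. Conj (T1 \<sigma>) (T2 \<sigma>)"]) auto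
next
  case (Box i \<phi>)
  then obtain T where T1: "finite (T ` Act E)" and T2: "\<And>\<sigma> M s. \<sigma>\<in>Act E \<Longrightarrow> wf_model M \<Longrightarrow> good \<Lambda> M s \<Longrightarrow> s \<in> W M
      \<Longrightarrow> sat M s (pre E \<sigma>) \<Longrightarrow> (sat (upd_model M E) (prod_encode (s,\<sigma>)) \<phi> \<longleftrightarrow> sat M s (T \<sigma>))"
    by blast
  define key where "key = (\<lambda>\<tau>. (pclass \<Lambda> (pre E \<tau>), T \<tau>))"
  define P where "P = key ` Act E"
  have "P \<subseteq> ((\<lambda>\<sigma>. pclass \<Lambda> (pre E \<sigma>)) ` Act E) \<times> (T ` Act E)"
    unfolding P_def key_def by auto
  hence fP: "finite P" using T1 pf unfolding precondition_finite_def
    by (metis finite_cartesian_product finite_subset)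
  define rep where "rep = (\<lambda>p. SOME \<tau>. \<tau> \<in> Act E \<and> key \<tau> = p)"
  have rep: "\<And>p. p \<in> P \<Longrightarrow> rep p \<in> Act E \<and> key (rep p) = p"
    unfolding rep_def P_def by (rule someI_ex) auto
  define Q where "Q = (\<lambda>\<sigma>. key ` {\<tau>. (\<sigma>,\<tau>) \<in> ARel E i})"
  have QP: "\<And>\<sigma>. Q \<sigma> \<subseteq> P" unfolding Q_def P_def using wa unfolding wf_amodel_def by blast
  define g where "g = (\<lambda>Q. conjs (list_of ((\<lambda>p. Box i (Imp (pre E (rep p)) (T (rep p)))) ` Q)))"
  have fin: "finite ((\<lambda>\<sigma>. g (Q \<sigma>)) ` Act E)"
  proof -
    have "(\<lambda>\<sigma>. g (Q \<sigma>)) ` Act E \<subseteq> g ` Pow P" using QP by auto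
    thus ?thesis using fP by (meson finite_Pow_iff finite_imageI finite_subset)
  qed
  have sg: "\<And>M s \<sigma>. sat M s (g (Q \<sigma>)) \<longleftrightarrow> (\<forall>p\<in>Q \<sigma>. sat M s (Box i (Imp (pre E (rep p)) (T (rep p)))))"
  proof -
    fix M s \<sigma>
    have "finite (Q \<sigma>)" using QP fP by (meson finite_subset)
    thus "?thesis M s \<sigma>" unfolding g_def sat_conjs by (simp add: set_list_of)
  qed
  have "\<forall>\<sigma>\<in>Act E. \<forall>M s. wf_model M \<longrightarrow> good \<Lambda> M s \<longrightarrow> s \<in> W M
      \<longrightarrow> sat M s (pre E \<sigma>) \<longrightarrow> (sat (upd_model M E) (prod_encode (s,\<sigma>)) (Box i \<phi>) \<longleftrightarrow> sat M s (g (Q \<sigma>)))"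
  proof (intro ballI allI impI)
    fix \<sigma> M s
    assume \<sigma>: "\<sigma> \<in> Act E" and wM: "wf_model M" and gs: "good \<Lambda> M s" and sW: "s \<in> W M"
      and ps: "sat M s (pre E \<sigma>)"
    have tW: "\<And>t. (s,t) \<in> Rel M i \<Longrightarrow> t \<in> W M" using wM unfolding wf_model_def by blast
    have tA: "\<And>\<tau>. (\<sigma>,\<tau>) \<in> ARel E i \<Longrightarrow> \<tau> \<in> Act E" using wa unfolding wf_amodel_def by blast
    have gt: "\<And>t. (s,t) \<in> Rel M i \<Longrightarrow> good \<Lambda> M t" using good_succ[OF n gs] by blast
    have L: "sat (upd_model M E) (prod_encode (s,\<sigma>)) (Box i \<phi>) \<longleftrightarrow>
       (\<forall>t \<tau>. (s,t) \<in> Rel M i \<longrightarrow> (\<sigma>,\<tau>) \<in> ARel E i \<longrightarrow> sat M t (pre E \<tau>) \<longrightarrow> sat M t (T \<tau>))"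
    proof
      assume H: "sat (upd_model M E) (prod_encode (s,\<sigma>)) (Box i \<phi>)"
      show "\<forall>t \<tau>. (s,t) \<in> Rel M i \<longrightarrow> (\<sigma>,\<tau>) \<in> ARel E i \<longrightarrow> sat M t (pre E \<tau>) \<longrightarrow> sat M t (T \<tau>)"
      proof (intro allI impI)
        fix t \<tau> assume a: "(s,t) \<in> Rel M i" "(\<sigma>,\<tau>) \<in> ARel E i" "sat M t (pre E \<tau>)"
        have "(prod_encode (s,\<sigma>), prod_encode (t,\<tau>)) \<in> Rel (upd_model M E) i"
          unfolding upd_Rel upd_W using a \<sigma> sW ps tW tA by blast
        hence "sat (upd_model M E) (prod_encode (t,\<tau>)) \<phi>" using H by simp
        thus "sat M t (T \<tau>)" using T2[OF tA[OF a(2)] wM gt[OF a(1)] tW[OF a(1)] a(3)] by simp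
      qed
    next
      assume H: "\<forall>t \<tau>. (s,t) \<in> Rel M i \<longrightarrow> (\<sigma>,\<tau>) \<in> ARel E i \<longrightarrow> sat M t (pre E \<tau>) \<longrightarrow> sat M t (T \<tau>)"
      show "sat (upd_model M E) (prod_encode (s,\<sigma>)) (Box i \<phi>)"
      proof (simp, intro allI impI)
        fix u assume "(prod_encode (s,\<sigma>), u) \<in> Rel (upd_model M E) i"
        then obtain t \<tau> where u: "u = prod_encode (t,\<tau>)" and a: "(s,t) \<in> Rel M i" "(\<sigma>,\<tau>) \<in> ARel E i"
          "sat M t (pre E \<tau>)" unfolding upd_Rel upd_W by blast
        show "sat (upd_model M E) u \<phi>"
          using u H a T2[OF tA[OF a(2)] wM gt[OF a(1)] tW[OF a(1)] a(3)] by simp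
      qed
    qed
    show "sat (upd_model M E) (prod_encode (s,\<sigma>)) (Box i \<phi>) \<longleftrightarrow> sat M s (g (Q \<sigma>))"
      unfolding L sg
    proof
      assume H: "\<forall>t \<tau>. (s,t) \<in> Rel M i \<longrightarrow> (\<sigma>,\<tau>) \<in> ARel E i \<longrightarrow> sat M t (pre E \<tau>) \<longrightarrow> sat M t (T \<tau>)"
      show "\<forall>p\<in>Q \<sigma>. sat M s (Box i (Imp (pre E (rep p)) (T (rep p))))"
      proof (intro ballI, simp, intro allI impI)
        fix p t assume p: "p \<in> Q \<sigma>" and st: "(s,t) \<in> Rel M i" and pr: "sat M t (pre E (rep p))"
        obtain \<tau> where \<tau>: "(\<sigma>,\<tau>) \<in> ARel E i" "p = key \<tau>" using p unfolding Q_def by blast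
        have "key \<tau> \<in> P" using tA[OF \<tau>(1)] unfolding P_def by blast
        hence "key (rep (key \<tau>)) = key \<tau>" by (rule rep[THEN conjunct2])
        hence kr: "key (rep p) = key \<tau>" unfolding \<tau>(2) .
        hence "pclass \<Lambda> (pre E (rep p)) = pclass \<Lambda> (pre E \<tau>)" unfolding key_def by simp
        hence "sat M t (pre E \<tau>)" using pr pclass_eq[OF n gt[OF st]] by blast
        hence "sat M t (T \<tau>)" using H st \<tau> by blast
        thus "sat M t (T (rep p))" using kr unfolding key_def by simp
      qed
    next
      assume H: "\<forall>p\<in>Q \<sigma>. sat M s (Box i (Imp (pre E (rep p)) (T (rep p))))"
      show "\<forall>t \<tau>. (s,t) \<in> Rel M i \<longrightarrow> (\<sigma>,\<tau>) \<in> ARel E i \<longrightarrow> sat M t (pre E \<tau>) \<longrightarrow> sat M t (T \<tau>)"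
      proof (intro allI impI)
        fix t \<tau> assume st: "(s,t) \<in> Rel M i" and \<tau>: "(\<sigma>,\<tau>) \<in> ARel E i" and pr: "sat M t (pre E \<tau>)"
        have p: "key \<tau> \<in> Q \<sigma>" using \<tau> unfolding Q_def by blast
        have "key \<tau> \<in> P" using tA[OF \<tau>] unfolding P_def by blast
        hence kr: "key (rep (key \<tau>)) = key \<tau>" by (rule rep[THEN conjunct2])
        hence "pclass \<Lambda> (pre E (rep (key \<tau>))) = pclass \<Lambda> (pre E \<tau>)" unfolding key_def by simp
        hence "sat M t (pre E (rep (key \<tau>)))" using pr pclass_eq[OF n gt[OF st]] by blast
        hence "sat M t (T (rep (key \<tau>)))" using H p st by auto
        thus "sat M t (T \<tau>)" using kr unfolding key_def by simp
      qed
    qed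
  qed
  note R = this
  show ?case by (rule exI[of _ "\<lambda>\<sigma>. g (Q \<sigma>)"], rule conjI[OF fin R])
qed

theorem proposition32:
  fixes X :: "('p::countable, 'i::countable) pmodel set"
    and \<Lambda> :: "('p, 'i) fm set"
  assumes X_wf: "\<forall>x\<in>X. wf_pmodel x"
    and normal: "normal_logic \<Lambda>"
    and sound: "sound_wrt \<Lambda> X"
  shows "\<forall>(E :: ('p,'i) amodel) \<Gamma>.
           wf_amodel E \<Gamma> \<and> precondition_finite \<Lambda> E \<and> closing E \<Gamma> X
           \<and> deterministic E \<Gamma> X \<and> exhaustive E \<Gamma> X \<longrightarrow>
           (\<forall>x\<in>X. (\<exists>!\<sigma>. \<sigma> \<in> \<Gamma> \<and> psat x (pre E \<sigma>))
                   \<and> upd x E \<Gamma> \<in> X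
                   \<and> mclass X (upd x E \<Gamma>) \<in> mspace X
                   \<and> (\<forall>y\<in>X. mclass X y = mclass X x \<longrightarrow>
                          mclass X (upd y E \<Gamma>) = mclass X (upd x E \<Gamma>)))"
proof (intro allI impI ballI conjI)
  fix E :: "('p,'i) amodel" and \<Gamma> x
  assume H: "wf_amodel E \<Gamma> \<and> precondition_finite \<Lambda> E \<and> closing E \<Gamma> X
           \<and> deterministic E \<Gamma> X \<and> exhaustive E \<Gamma> X" and x: "x \<in> X"
  have ex1: "\<And>z. z \<in> X \<Longrightarrow> \<exists>!\<sigma>. \<sigma> \<in> \<Gamma> \<and> psat z (pre E \<sigma>)"
  proof -
    fix z assume z: "z \<in> X"
    obtain \<sigma> where "\<sigma> \<in> \<Gamma>" "psat z (pre E \<sigma>)" using H z unfolding exhaustive_def by blast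
    moreover have "\<And>\<sigma>'. \<sigma>' \<in> \<Gamma> \<Longrightarrow> psat z (pre E \<sigma>') \<Longrightarrow> \<sigma>' = \<sigma>"
    proof (rule ccontr)
      fix \<sigma>' assume a: "\<sigma>' \<in> \<Gamma>" "psat z (pre E \<sigma>')" "\<sigma>' \<noteq> \<sigma>"
      have D: "deterministic E \<Gamma> X" using H by blast
      have "psat z (Imp (Conj (pre E \<sigma>') (pre E \<sigma>)) Bot)"
        using D z a(1,3) calculation(1) unfolding deterministic_def by blast
      thus False using a(2) calculation(2) unfolding psat_def by simp
    qed
    ultimately show "\<exists>!\<sigma>. \<sigma> \<in> \<Gamma> \<and> psat z (pre E \<sigma>)" by blast
  qed
  show "\<exists>!\<sigma>. \<sigma> \<in> \<Gamma> \<and> psat x (pre E \<sigma>)" using ex1[OF x] .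
  show ux: "upd x E \<Gamma> \<in> X" using H x unfolding closing_def by blast
  thus "mclass X (upd x E \<Gamma>) \<in> mspace X" unfolding mspace_def by blast
  fix y assume y: "y \<in> X" and eq: "mclass X y = mclass X x"
  have "y \<in> mclass X y" using y unfolding mclass_def meq_def by simp
  hence "y \<in> mclass X x" using eq by simp
  hence mxy: "meq y x" unfolding mclass_def by simp
  define \<sigma> where "\<sigma> = (THE \<sigma>. \<sigma> \<in> \<Gamma> \<and> psat x (pre E \<sigma>))"
  have \<sigma>x: "\<sigma> \<in> \<Gamma> \<and> psat x (pre E \<sigma>)" unfolding \<sigma>_def using theI'[OF ex1[OF x]] .
  have "psat y (pre E \<sigma>) = psat x (pre E \<sigma>)" using mxy unfolding meq_def by (rule spec)
  hence \<sigma>y: "\<sigma> \<in> \<Gamma> \<and> psat y (pre E \<sigma>)" using \<sigma>x by simp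
  have \<sigma>y': "(THE \<sigma>. \<sigma> \<in> \<Gamma> \<and> psat y (pre E \<sigma>)) = \<sigma>"
    by (rule the1_equality[OF ex1[OF y] \<sigma>y])
  have \<sigma>A: "\<sigma> \<in> Act E" using H \<sigma>x unfolding wf_amodel_def by blast
  have gz: "good \<Lambda> (fst z) (snd z) \<and> wf_model (fst z) \<and> snd z \<in> W (fst z)" if z: "z \<in> X" for z
  proof -
    have "good \<Lambda> (fst z) (snd z)" using sound z unfolding sound_wrt_def good_def psat_def by blast
    moreover have "wf_pmodel z" using X_wf z by blast
    ultimately show ?thesis unfolding wf_pmodel_def by blast
  qed
  have "meq (upd y E \<Gamma>) (upd x E \<Gamma>)"
    unfolding meq_def
  proof
    fix \<phi>
    obtain T where T: "\<forall>\<sigma>\<in>Act E. \<forall>M s. wf_model M \<longrightarrow> good \<Lambda> M s \<longrightarrow> s \<in> W M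
      \<longrightarrow> sat M s (pre E \<sigma>) \<longrightarrow> (sat (upd_model M E) (prod_encode (s,\<sigma>)) \<phi> \<longleftrightarrow> sat M s (T \<sigma>))"
      using translation[OF normal, of E \<Gamma> \<phi>] H by blast
    have ux': "upd x E \<Gamma> = (upd_model (fst x) E, prod_encode (snd x, \<sigma>))"
      unfolding upd_def \<sigma>_def by (rule refl)
    have uy': "upd y E \<Gamma> = (upd_model (fst y) E, prod_encode (snd y, \<sigma>))"
      unfolding upd_def \<sigma>y' by (rule refl)
    have "sat (upd_model (fst x) E) (prod_encode (snd x, \<sigma>)) \<phi> = sat (fst x) (snd x) (T \<sigma>)"
      using T \<sigma>A gz[OF x] \<sigma>x unfolding psat_def by blast
    hence 1: "psat (upd x E \<Gamma>) \<phi> = psat x (T \<sigma>)" unfolding ux' psat_def by simp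
    have "sat (upd_model (fst y) E) (prod_encode (snd y, \<sigma>)) \<phi> = sat (fst y) (snd y) (T \<sigma>)"
      using T \<sigma>A gz[OF y] \<sigma>y unfolding psat_def by blast
    hence 2: "psat (upd y E \<Gamma>) \<phi> = psat y (T \<sigma>)" unfolding uy' psat_def by simp
    have "psat y (T \<sigma>) = psat x (T \<sigma>)" using mxy unfolding meq_def by (rule spec)
    thus "psat (upd y E \<Gamma>) \<phi> = psat (upd x E \<Gamma>) \<phi>" using 1 2 by simp
  qed
  hence eqs: "\<And>a. psat (upd y E \<Gamma>) a = psat (upd x E \<Gamma>) a" unfolding meq_def by (rule spec)
  show "mclass X (upd y E \<Gamma>) = mclass X (upd x E \<Gamma>)"
    unfolding mclass_def meq_def by (simp add: eqs)
qed

end
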